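(* Let $(X,L_1,\dots,L_n)$ have any joint distribution with $X$ finitely supported, $L_i\in\{0,1\}$, and $\Pr(L_i=0\mid X=x)>0$ for all $i$ and all $x$ in the support of $X$. Let $\pi$ be a collaborating cryptogenography protocol and $T$ its full transcript. Then \[ I(X;T)\le\sum_{i=1}^n\bigl(\mathrm{susp}_i(X,T)-\mathrm{susp}_i(X)\bigr). \]
   Context: All logarithms are base $2$. Collaborating cryptogenography protocol: there are $n$ players $\mathrm{plr}_1,\dots,\mathrm{plr}_n$; a secret $X$ (finitely supported) and indicators $L_1,\dots,L_n\in\{0,1\}$ ($L_i=1$ means $\mathrm{plr}_i$ knows $X$) have a joint distribution. A protocol $\pi$ specifies, for every possible partial transcript $t^k=(t_1,\dots,t_k)$ (the tuple of the first $k$ messages): whether communication stops; if not, which player $\mathrm{plr}_i$ sends the next message; and probability distributions $p_?$ and $(p_x)_{x}$ on a finite message set (depending on $t^k$). $\mathrm{plr}_i$ draws the next message, with fresh independent randomness, from $p_?$ if $L_i=0$ and from $p_x$ if $L_i=1$ and $X=x$. There is a number $\mathrm{length}(\pi)$ such that the protocol always stops after at most that many messages. $T$ denotes the random full transcript. Suspicion of player $i$: for a random variable $Y$ (possibly a tuple) and $y$ with $\Pr(Y=y)>0$, $\mathrm{susp}_i(Y=y)=-\log\Pr(L_i=0\mid Y=y)\in[0,\infty]$ and $\mathrm{susp}_i(Y)=\sum_y\Pr(Y=y)\mathrm{susp}_i(Y=y)$. *)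

theory Defs
  imports "HOL-Probability.Probability"
begin

text \<open>Players are indexed 0..n-1; the knowledge vector (L_1,...,L_n) is a bool list of
length n, where True means "knows X" (L_i = 1).\<close>

text \<open>A protocol: for each partial transcript, None = stop, or Some (i, p_?, p_x)
= player i sends the next message drawn from p_? (if ignorant) or p_x (if knows X = x).\<close>
type_synonym ('x, 'm) protocol = "'m list \<Rightarrow> (nat \<times> 'm pmf \<times> ('x \<Rightarrow> 'm pmf)) option"

primrec run_protocol ::
  "('x, 'm) protocol \<Rightarrow> nat \<Rightarrow> 'x \<Rightarrow> bool list \<Rightarrow> 'm list \<Rightarrow> 'm list pmf" where
  "run_protocol prot 0 x l t = return_pmf t"
| "run_protocol prot (Suc k) x l t =
     (case prot t of
        None \<Rightarrow> return_pmf t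
      | Some (i, p0, px) \<Rightarrow>
          bind_pmf (if l ! i then px x else p0) (\<lambda>m. run_protocol prot k x l (t @ [m])))"

definition joint_dist ::
  "('x \<times> bool list) pmf \<Rightarrow> ('x, 'm) protocol \<Rightarrow> nat \<Rightarrow> ('x \<times> bool list \<times> 'm list) pmf" where
  "joint_dist \<mu> prot N =
     bind_pmf \<mu> (\<lambda>(x, l). map_pmf (\<lambda>t. (x, l, t)) (run_protocol prot N x l []))"

definition mutual_info :: "('a \<times> 'b) pmf \<Rightarrow> real" where
  "mutual_info p = (\<Sum>(a, b) \<in> set_pmf p.
      pmf p (a, b) * log 2 (pmf p (a, b) / (pmf (map_pmf fst p) a * pmf (map_pmf snd p) b)))"

definition neglog :: "real \<Rightarrow> ereal" where
  "neglog q = (if q = 0 then \<infinity> else ereal (- log 2 q))"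

definition cond_ignorant :: "('y \<times> bool list) pmf \<Rightarrow> nat \<Rightarrow> 'y \<Rightarrow> real" where
  "cond_ignorant J i y =
     measure_pmf.prob J {(y', l). y' = y \<and> \<not> l ! i} / measure_pmf.prob J {(y', l). y' = y}"

definition susp :: "('y \<times> bool list) pmf \<Rightarrow> nat \<Rightarrow> ereal" where
  "susp J i = (\<Sum>y \<in> fst ` set_pmf J.
      ereal (pmf (map_pmf fst J) y) * neglog (cond_ignorant J i y))"

end

theory Submission
  imports Defs
begin


definition Aw :: "('x \<Rightarrow> bool list \<Rightarrow> 'y \<Rightarrow> real) \<Rightarrow> bool list set \<Rightarrow> 'x \<Rightarrow> 'y \<Rightarrow> real" where
  "Aw w Ls x y = (\<Sum>l\<in>Ls. w x l y)"
definition Bw :: "('x \<Rightarrow> bool list \<Rightarrow> 'y \<Rightarrow> real) \<Rightarrow> bool list set \<Rightarrow> nat \<Rightarrow> 'x \<Rightarrow> 'y \<Rightarrow> real" where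
  "Bw w Ls j x y = (\<Sum>l\<in>Ls. if l ! j then 0 else w x l y)"
definition AXw where "AXw w Ls Ys x = (\<Sum>y\<in>Ys. Aw w Ls x y)"
definition CXw where "CXw w Ls Ys j x = (\<Sum>y\<in>Ys. Bw w Ls j x y)"
definition AYw where "AYw w Xs Ls y = (\<Sum>x\<in>Xs. Aw w Ls x y)"
definition Sw where "Sw w Xs Ls Ys = (\<Sum>x\<in>Xs. AXw w Ls Ys x)"
definition SXY where "SXY w Xs Ls Ys j =
  (\<Sum>x\<in>Xs. \<Sum>y\<in>Ys. Aw w Ls x y * log 2 (Aw w Ls x y / Bw w Ls j x y))"
definition SX where "SX w Xs Ls Ys j =
  (\<Sum>x\<in>Xs. AXw w Ls Ys x * log 2 (AXw w Ls Ys x / CXw w Ls Ys j x))"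
definition MI where "MI w Xs Ls Ys =
  (\<Sum>x\<in>Xs. \<Sum>y\<in>Ys. Aw w Ls x y * log 2 (Aw w Ls x y * Sw w Xs Ls Ys / (AXw w Ls Ys x * AYw w Xs Ls y)))"
definition FF where "FF n w Xs Ls Ys = (\<Sum>j<n. SXY w Xs Ls Ys j - SX w Xs Ls Ys j) - MI w Xs Ls Ys"
definition posc where "posc n w Xs Ls Ys = (\<forall>x\<in>Xs. \<forall>y\<in>Ys. \<forall>j<n. Aw w Ls x y > 0 \<longrightarrow> Bw w Ls j x y > 0)"

lemma FF_cong:
  assumes "\<And>x l y. x \<in> Xs \<Longrightarrow> l \<in> Ls \<Longrightarrow> y \<in> Ys \<Longrightarrow> w x l y = w' x l y"
  shows "FF n w Xs Ls Ys = FF n w' Xs Ls Ys" "posc n w Xs Ls Ys = posc n w' Xs Ls Ys"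
proof -
  have A: "\<And>x y. x \<in> Xs \<Longrightarrow> y \<in> Ys \<Longrightarrow> Aw w Ls x y = Aw w' Ls x y"
    unfolding Aw_def using assms by (intro sum.cong) auto
  have B: "\<And>j x y. x \<in> Xs \<Longrightarrow> y \<in> Ys \<Longrightarrow> Bw w Ls j x y = Bw w' Ls j x y"
    unfolding Bw_def using assms by (intro sum.cong) auto
  have AX: "\<And>x. x \<in> Xs \<Longrightarrow> AXw w Ls Ys x = AXw w' Ls Ys x"
    unfolding AXw_def using A by (intro sum.cong) auto
  have CX: "\<And>j x. x \<in> Xs \<Longrightarrow> CXw w Ls Ys j x = CXw w' Ls Ys j x"
    unfolding CXw_def using B by (intro sum.cong) auto
  have AY: "\<And>y. y \<in> Ys \<Longrightarrow> AYw w Xs Ls y = AYw w' Xs Ls y"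
    unfolding AYw_def using A by (intro sum.cong) auto
  have S: "Sw w Xs Ls Ys = Sw w' Xs Ls Ys"
    unfolding Sw_def using AX by (intro sum.cong) auto
  show "FF n w Xs Ls Ys = FF n w' Xs Ls Ys"
    unfolding FF_def SXY_def SX_def MI_def using A B AX CX AY S
    by (intro arg_cong2[where f="(-)"] sum.cong refl) auto
  show "posc n w Xs Ls Ys = posc n w' Xs Ls Ys"
    unfolding posc_def using A B by auto
qed

lemma log_sum_term:
  fixes a b A B :: real
  assumes "0 \<le> a" "0 \<le> b" "a > 0 \<Longrightarrow> b > 0" "A > 0" "B > 0"
  shows "a * log 2 (A / B) - (b * A / B - a) / ln 2 \<le> a * log 2 (a / b)"
proof (cases "a = 0")
  case True then show ?thesis using assms by (simp add: divide_nonneg_nonneg)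
next
  case False
  then have a: "a > 0" using assms by auto
  then have b: "b > 0" using assms by auto
  define z where "z = b * A / (a * B)"
  have z: "z > 0" unfolding z_def using a b assms by auto
  have "ln z \<le> z - 1" using z by (rule ln_le_minus_one)
  moreover have "ln z = ln b + ln A - ln a - ln B"
    unfolding z_def using a b assms by (simp add: ln_div ln_mult)
  ultimately have "ln a + ln B - ln b - ln A \<ge> 1 - z" by linarith
  then have "a * (ln a + ln B - ln b - ln A) \<ge> a * (1 - z)" using a by (simp add: mult_left_mono)
  also have "a * (1 - z) = a - b * A / B" unfolding z_def using a assms by (simp add: field_simps)
  finally have *: "a * (ln a - ln b) - a * (ln A - ln B) \<ge> a - b * A / B" by (simp add: algebra_simps)
  have ln2: "ln (2::real) > 0" by simp
  have "a * log 2 (a / b) - a * log 2 (A / B) = (a * (ln a - ln b) - a * (ln A - ln B)) / ln 2"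
    using a b assms by (simp add: log_def ln_div field_simps)
  also have "\<dots> \<ge> (a - b * A / B) / ln 2" using * ln2 by (simp add: divide_right_mono)
  finally show ?thesis by (simp add: field_simps)
qed

lemma log_sum:
  fixes a b :: "'k \<Rightarrow> real"
  assumes K: "finite K" and nn: "\<And>k. k \<in> K \<Longrightarrow> 0 \<le> a k" "\<And>k. k \<in> K \<Longrightarrow> 0 \<le> b k"
    and pos: "\<And>k. k \<in> K \<Longrightarrow> a k > 0 \<Longrightarrow> b k > 0"
  shows "sum a K * log 2 (sum a K / sum b K) \<le> (\<Sum>k\<in>K. a k * log 2 (a k / b k))"
proof (cases "sum a K = 0")
  case True
  then have "\<forall>k\<in>K. a k = 0" using sum_nonneg_eq_0_iff[OF K, of a] nn(1) by simp
  then show ?thesis using True by simp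
next
  case False
  have "\<exists>k\<in>K. a k > 0"
  proof (rule ccontr)
    assume "\<not> ?thesis"
    then have "\<forall>k\<in>K. a k = 0" using nn(1) by (auto simp: order_le_less)
    then show False using False by simp
  qed
  then obtain k where k: "k \<in> K" "a k > 0" by blast
  have "b k > 0" using pos k by auto
  moreover have "b k \<le> sum b K" using K k(1) nn(2) by (intro member_le_sum) auto
  ultimately have "sum b K > 0" by linarith
  have "a k \<le> sum a K" using K k(1) nn(1) by (intro member_le_sum) auto
  then have "sum a K > 0" using k(2) by linarith
  define A where "A = sum a K"
  define B where "B = sum b K"
  have AB: "A > 0" "B > 0" unfolding A_def B_def by fact+
  have "(\<Sum>k\<in>K. a k * log 2 (A / B) - (b k * A / B - a k) / ln 2) \<le> (\<Sum>k\<in>K. a k * log 2 (a k / b k))"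
    by (intro sum_mono log_sum_term nn pos AB) auto
  moreover have "(\<Sum>k\<in>K. a k * log 2 (A / B) - (b k * A / B - a k) / ln 2) = A * log 2 (A / B) - (B * A / B - A) / ln 2"
    unfolding sum_subtractf by (simp add: A_def B_def sum_distrib_right sum_divide_distrib[symmetric] sum_subtractf)
  moreover have "B * A / B - A = 0" using AB by simp
  ultimately show ?thesis unfolding A_def B_def by simp
qed




lemma gsum:
  assumes "finite Ts" "finite Ms" "g ` Ts \<subseteq> Ms"
  shows "(\<Sum>m\<in>Ms. \<Sum>t\<in>Ts. if g t = m then h m t else 0) = (\<Sum>t\<in>Ts. h (g t) t)"
proof -
  have "(\<Sum>m\<in>Ms. \<Sum>t\<in>Ts. if g t = m then h m t else 0) = (\<Sum>t\<in>Ts. \<Sum>m\<in>Ms. if g t = m then h m t else 0)"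
    by (rule sum.swap)
  also have "\<dots> = (\<Sum>t\<in>Ts. h (g t) t)"
    using assms by (intro sum.cong refl) (auto simp: sum.delta)
  finally show ?thesis .
qed

locale decomp =
  fixes Xs :: "'x set" and Ls :: "bool list set" and Ts :: "'t set" and Ms :: "'m set"
    and g :: "'t \<Rightarrow> 'm" and w :: "'x \<Rightarrow> bool list \<Rightarrow> 't \<Rightarrow> real"
  assumes fin: "finite Xs" "finite Ls" "finite Ts" "finite Ms"
    and gT: "g ` Ts \<subseteq> Ms"
    and nn: "\<And>x l t. x \<in> Xs \<Longrightarrow> l \<in> Ls \<Longrightarrow> t \<in> Ts \<Longrightarrow> 0 \<le> w x l t"
begin

definition "wm m x l t = (if g t = m then w x l t else 0)"
definition "v x l m = (\<Sum>t\<in>Ts. wm m x l t)"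

lemma A_wm: "Aw (wm m) Ls x t = (if g t = m then Aw w Ls x t else 0)"
  unfolding Aw_def wm_def by simp
lemma B_wm: "Bw (wm m) Ls j x t = (if g t = m then Bw w Ls j x t else 0)"
  unfolding Bw_def wm_def by (cases "g t = m") (simp_all cong: if_cong)

lemma Av: "Aw v Ls x m = (\<Sum>t\<in>Ts. if g t = m then Aw w Ls x t else 0)"
proof -
  have "Aw v Ls x m = (\<Sum>t\<in>Ts. Aw (wm m) Ls x t)"
    unfolding Aw_def v_def by (rule sum.swap)
  then show ?thesis by (simp add: A_wm)
qed

lemma Bv: "Bw v Ls j x m = (\<Sum>t\<in>Ts. if g t = m then Bw w Ls j x t else 0)"
proof -
  have "Bw v Ls j x m = (\<Sum>l\<in>Ls. \<Sum>t\<in>Ts. if l ! j then 0 else wm m x l t)"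
    unfolding Bw_def v_def by (intro sum.cong) auto
  also have "\<dots> = (\<Sum>t\<in>Ts. Bw (wm m) Ls j x t)"
    unfolding Bw_def by (rule sum.swap)
  finally show ?thesis by (simp add: B_wm)
qed

lemma AX_wm: "AXw (wm m) Ls Ts x = Aw v Ls x m"
  unfolding AXw_def Av by (simp add: A_wm)
lemma CX_wm: "CXw (wm m) Ls Ts j x = Bw v Ls j x m"
  unfolding CXw_def Bv by (simp add: B_wm)
lemma AX_v: "AXw v Ls Ms x = AXw w Ls Ts x"
  unfolding AXw_def Av using gsum[OF fin(3,4) gT, of "\<lambda>m t. Aw w Ls x t"] by simp
lemma CX_v: "CXw v Ls Ms j x = CXw w Ls Ts j x"
  unfolding CXw_def Bv using gsum[OF fin(3,4) gT, of "\<lambda>m t. Bw w Ls j x t"] by simp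
lemma AY_wm: "AYw (wm m) Xs Ls t = (if g t = m then AYw w Xs Ls t else 0)"
  unfolding AYw_def by (simp add: A_wm)
lemma S_wm: "Sw (wm m) Xs Ls Ts = AYw v Xs Ls m"
  unfolding Sw_def AYw_def by (simp add: AX_wm)
lemma S_v: "Sw v Xs Ls Ms = Sw w Xs Ls Ts"
  unfolding Sw_def by (simp add: AX_v)

lemma SXY_decomp: "(\<Sum>m\<in>Ms. SXY (wm m) Xs Ls Ts j) = SXY w Xs Ls Ts j"
proof -
  have "(\<Sum>m\<in>Ms. SXY (wm m) Xs Ls Ts j) = (\<Sum>m\<in>Ms. \<Sum>x\<in>Xs. \<Sum>t\<in>Ts. if g t = m then Aw w Ls x t * log 2 (Aw w Ls x t / Bw w Ls j x t) else 0)"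
    unfolding SXY_def by (intro sum.cong refl) (simp add: A_wm B_wm)
  also have "\<dots> = (\<Sum>x\<in>Xs. \<Sum>m\<in>Ms. \<Sum>t\<in>Ts. if g t = m then Aw w Ls x t * log 2 (Aw w Ls x t / Bw w Ls j x t) else 0)"
    by (rule sum.swap)
  also have "\<dots> = SXY w Xs Ls Ts j"
    unfolding SXY_def by (simp only: gsum[OF fin(3,4) gT])
  finally show ?thesis .
qed

lemma SX_decomp: "(\<Sum>m\<in>Ms. SX (wm m) Xs Ls Ts j) = SXY v Xs Ls Ms j"
  unfolding SX_def SXY_def AX_wm CX_wm by (rule sum.swap)

lemma SX_v: "SX v Xs Ls Ms j = SX w Xs Ls Ts j"
  unfolding SX_def AX_v CX_v ..

lemma A_nn: "x \<in> Xs \<Longrightarrow> t \<in> Ts \<Longrightarrow> 0 \<le> Aw w Ls x t"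
  unfolding Aw_def using nn by (simp add: sum_nonneg)

lemma MI_decomp: "(\<Sum>m\<in>Ms. MI (wm m) Xs Ls Ts) + MI v Xs Ls Ms = MI w Xs Ls Ts"
proof -
  let ?A = "Aw w Ls" and ?Av = "Aw v Ls" and ?AYv = "AYw v Xs Ls" and ?AY = "AYw w Xs Ls"
    and ?AX = "AXw w Ls Ts" and ?S = "Sw w Xs Ls Ts"
  have 1: "(\<Sum>m\<in>Ms. MI (wm m) Xs Ls Ts) = (\<Sum>x\<in>Xs. \<Sum>t\<in>Ts. ?A x t * log 2 (?A x t * ?AYv (g t) / (?Av x (g t) * ?AY t)))"
  proof -
    have "(\<Sum>m\<in>Ms. MI (wm m) Xs Ls Ts) = (\<Sum>m\<in>Ms. \<Sum>x\<in>Xs. \<Sum>t\<in>Ts. if g t = m then ?A x t * log 2 (?A x t * ?AYv m / (?Av x m * ?AY t)) else 0)"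
      unfolding MI_def by (intro sum.cong refl) (simp add: A_wm AY_wm AX_wm S_wm)
    also have "\<dots> = (\<Sum>x\<in>Xs. \<Sum>m\<in>Ms. \<Sum>t\<in>Ts. if g t = m then ?A x t * log 2 (?A x t * ?AYv m / (?Av x m * ?AY t)) else 0)"
      by (rule sum.swap)
    also have "\<dots> = (\<Sum>x\<in>Xs. \<Sum>t\<in>Ts. ?A x t * log 2 (?A x t * ?AYv (g t) / (?Av x (g t) * ?AY t)))"
      by (simp only: gsum[OF fin(3,4) gT])
    finally show ?thesis .
  qed
  have 2: "MI v Xs Ls Ms = (\<Sum>x\<in>Xs. \<Sum>t\<in>Ts. ?A x t * log 2 (?Av x (g t) * ?S / (?AX x * ?AYv (g t))))"
  proof -
    have "MI v Xs Ls Ms = (\<Sum>x\<in>Xs. \<Sum>m\<in>Ms. \<Sum>t\<in>Ts. if g t = m then ?A x t * log 2 (?Av x m * ?S / (?AX x * ?AYv m)) else 0)"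
      unfolding MI_def S_v AX_v
      by (auto simp: Av sum_distrib_right intro!: sum.cong)
    also have "\<dots> = (\<Sum>x\<in>Xs. \<Sum>t\<in>Ts. ?A x t * log 2 (?Av x (g t) * ?S / (?AX x * ?AYv (g t))))"
      by (simp only: gsum[OF fin(3,4) gT])
    finally show ?thesis .
  qed
  have 3: "?A x t * log 2 (?A x t * ?AYv (g t) / (?Av x (g t) * ?AY t)) + ?A x t * log 2 (?Av x (g t) * ?S / (?AX x * ?AYv (g t)))
      = ?A x t * log 2 (?A x t * ?S / (?AX x * ?AY t))" if x: "x \<in> Xs" and t: "t \<in> Ts" for x t
  proof (cases "?A x t = 0")
    case True then show ?thesis by simp
  next
    case False
    then have a: "?A x t > 0" using A_nn[OF x t] by simp
    have "?A x t \<le> ?Av x (g t)"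
      unfolding Av using t fin A_nn x
      by (intro member_le_sum[of t Ts "\<lambda>t'. if g t' = g t then ?A x t' else 0", simplified]) auto
    then have av: "?Av x (g t) > 0" using a by simp
    have "?Av x (g t) \<le> ?AYv (g t)"
      unfolding AYw_def using x fin A_nn
      by (intro member_le_sum) (auto simp: Av intro!: sum_nonneg)
    then have ayv: "?AYv (g t) > 0" using av by simp
    have "?A x t \<le> ?AY t"
      unfolding AYw_def using x fin A_nn t by (intro member_le_sum) auto
    then have ay: "?AY t > 0" using a by simp
    have "?A x t \<le> ?AX x"
      unfolding AXw_def using x fin A_nn t by (intro member_le_sum) auto
    then have ax: "?AX x > 0" using a by simp
    have "?AX x \<le> ?S"
      unfolding Sw_def AXw_def using x fin A_nn by (intro member_le_sum) (auto intro!: sum_nonneg)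
    then have s: "?S > 0" using ax by simp
    have "log 2 (?A x t * ?AYv (g t) / (?Av x (g t) * ?AY t)) + log 2 (?Av x (g t) * ?S / (?AX x * ?AYv (g t)))
        = log 2 (?A x t * ?S / (?AX x * ?AY t))"
      using a av ayv ay ax s by (simp add: log_mult log_divide)
    then show ?thesis by (simp add: distrib_left[symmetric])
  qed
  show ?thesis unfolding 1 2 unfolding MI_def[of w] sum.distrib[symmetric]
    using 3 by (intro sum.cong refl) auto
qed

lemma FF_decomp: "FF n w Xs Ls Ts = (\<Sum>m\<in>Ms. FF n (wm m) Xs Ls Ts) + FF n v Xs Ls Ms"
proof -
  have e1: "(\<Sum>m\<in>Ms. FF n (wm m) Xs Ls Ts) = (\<Sum>j<n. \<Sum>m\<in>Ms. SXY (wm m) Xs Ls Ts j) - (\<Sum>j<n. \<Sum>m\<in>Ms. SX (wm m) Xs Ls Ts j) - (\<Sum>m\<in>Ms. MI (wm m) Xs Ls Ts)"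
    unfolding FF_def sum_subtractf by (simp add: sum.swap[of _ Ms])
  have e2: "(\<Sum>j<n. \<Sum>m\<in>Ms. SXY (wm m) Xs Ls Ts j) = (\<Sum>j<n. SXY w Xs Ls Ts j)"
    by (simp add: SXY_decomp)
  have e3: "(\<Sum>j<n. \<Sum>m\<in>Ms. SX (wm m) Xs Ls Ts j) = (\<Sum>j<n. SXY v Xs Ls Ms j)"
    by (simp add: SX_decomp)
  have e4: "FF n v Xs Ls Ms = (\<Sum>j<n. SXY v Xs Ls Ms j) - (\<Sum>j<n. SX w Xs Ls Ts j) - MI v Xs Ls Ms"
    unfolding FF_def sum_subtractf SX_v ..
  have e5: "FF n w Xs Ls Ts = (\<Sum>j<n. SXY w Xs Ls Ts j) - (\<Sum>j<n. SX w Xs Ls Ts j) - MI w Xs Ls Ts"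
    unfolding FF_def sum_subtractf ..
  show ?thesis using e1 e2 e3 e4 e5 MI_decomp by linarith
qed

lemma pos_wm: "posc n w Xs Ls Ts \<Longrightarrow> posc n (wm m) Xs Ls Ts"
  unfolding posc_def by (simp add: A_wm B_wm)

lemma pos_v: assumes "posc n w Xs Ls Ts" shows "posc n v Xs Ls Ms"
  unfolding posc_def
proof (intro ballI allI impI)
  fix x m j assume x: "x \<in> Xs" and m: "m \<in> Ms" and j: "j < n" and a: "0 < Aw v Ls x m"
  have "\<exists>t\<in>Ts. g t = m \<and> Aw w Ls x t > 0"
  proof (rule ccontr)
    assume "\<not> ?thesis"
    then have "\<forall>t\<in>Ts. (if g t = m then Aw w Ls x t else 0) \<le> 0" by auto
    then have "Aw v Ls x m \<le> 0" unfolding Av by (intro sum_nonpos) auto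
    then show False using a by simp
  qed
  then obtain t where t: "t \<in> Ts" "g t = m" "Aw w Ls x t > 0" by blast
  then have b: "Bw w Ls j x t > 0" using assms x j unfolding posc_def by auto
  have bnn: "\<And>t. t \<in> Ts \<Longrightarrow> 0 \<le> Bw w Ls j x t" unfolding Bw_def using nn x by (auto intro!: sum_nonneg)
  have "Bw w Ls j x t = (if g t = m then Bw w Ls j x t else 0)" using t by simp
  also have "\<dots> \<le> Bw v Ls j x m"
    unfolding Bv using t fin bnn by (intro member_le_sum) auto
  finally have "Bw w Ls j x t \<le> Bw v Ls j x m" .
  then show "0 < Bw v Ls j x m" using b by simp
qed

end



lemma one_step:
  fixes \<nu> :: "'x \<Rightarrow> bool list \<Rightarrow> real" and q0 :: "'m \<Rightarrow> real" and qx :: "'x \<Rightarrow> 'm \<Rightarrow> real"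
  assumes fin: "finite Xs" "finite Ls" "finite Ms" and i: "i < n"
    and nn: "\<And>x l. 0 \<le> \<nu> x l" "\<And>m. 0 \<le> q0 m" "\<And>x m. 0 \<le> qx x m"
    and sq: "(\<Sum>m\<in>Ms. q0 m) = 1"
    and v_def: "v = (\<lambda>x l m. \<nu> x l * (if l ! i then qx x m else q0 m))"
    and pos: "posc n v Xs Ls Ms"
  shows "0 \<le> FF n v Xs Ls Ms"
proof -
  let ?A = "Aw v Ls" and ?B = "Bw v Ls" and ?AX = "AXw v Ls Ms" and ?CX = "CXw v Ls Ms"
    and ?AY = "AYw v Xs Ls" and ?S = "Sw v Xs Ls Ms"
  have vnn: "0 \<le> v x l m" for x l m unfolding v_def using nn by auto
  have Ann: "0 \<le> ?A x m" for x m unfolding Aw_def using vnn by (simp add: sum_nonneg)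
  have Bnn: "0 \<le> ?B j x m" for j x m unfolding Bw_def using vnn by (simp add: sum_nonneg)
  have J: "SX v Xs Ls Ms j \<le> SXY v Xs Ls Ms j" if j: "j < n" for j
    unfolding SX_def SXY_def AXw_def CXw_def
  proof (rule sum_mono)
    fix x assume x: "x \<in> Xs"
    show "sum (?A x) Ms * log 2 (sum (?A x) Ms / sum (?B j x) Ms) \<le> (\<Sum>y\<in>Ms. ?A x y * log 2 (?A x y / ?B j x y))"
      using pos x j fin unfolding posc_def by (intro log_sum Ann Bnn) auto
  qed
  define c where "c x = (\<Sum>l\<in>Ls. if l ! i then 0 else \<nu> x l)" for x
  have cnn: "0 \<le> c x" for x unfolding c_def using nn by (simp add: sum_nonneg)
  have Bi: "?B i x m = c x * q0 m" for x m
    unfolding Bw_def c_def v_def sum_distrib_right by (intro sum.cong) auto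
  have CXi: "?CX i x = c x" for x
    unfolding CXw_def Bi sum_distrib_left[symmetric] sq by simp
  have AXs: "?AX x = (\<Sum>m\<in>Ms. ?A x m)" for x unfolding AXw_def ..
  have SAY: "?S = (\<Sum>m\<in>Ms. ?AY m)" unfolding Sw_def AXw_def AYw_def by (rule sum.swap)
  have key: "SXY v Xs Ls Ms i - SX v Xs Ls Ms i - MI v Xs Ls Ms
      = (\<Sum>x\<in>Xs. \<Sum>m\<in>Ms. ?A x m * log 2 (?AY m / (?S * q0 m)))"
  proof -
    have "SX v Xs Ls Ms i = (\<Sum>x\<in>Xs. \<Sum>m\<in>Ms. ?A x m * log 2 (?AX x / c x))"
      unfolding SX_def CXi by (simp add: AXs[of x for x] sum_distrib_right)
    then have "SXY v Xs Ls Ms i - SX v Xs Ls Ms i - MI v Xs Ls Ms =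
      (\<Sum>x\<in>Xs. \<Sum>m\<in>Ms. ?A x m * log 2 (?A x m / ?B i x m) - ?A x m * log 2 (?AX x / c x)
          - ?A x m * log 2 (?A x m * ?S / (?AX x * ?AY m)))"
      unfolding SXY_def MI_def by (simp add: sum_subtractf)
    also have "\<dots> = (\<Sum>x\<in>Xs. \<Sum>m\<in>Ms. ?A x m * log 2 (?AY m / (?S * q0 m)))"
    proof (intro sum.cong refl)
      fix x m assume x: "x \<in> Xs" and m: "m \<in> Ms"
      show "?A x m * log 2 (?A x m / ?B i x m) - ?A x m * log 2 (?AX x / c x)
          - ?A x m * log 2 (?A x m * ?S / (?AX x * ?AY m)) = ?A x m * log 2 (?AY m / (?S * q0 m))"
      proof (cases "?A x m = 0")
        case True then show ?thesis by simp
      next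
        case False
        then have a: "?A x m > 0" using Ann[of x m] by simp
        then have "?B i x m > 0" using pos x m i unfolding posc_def by auto
        then have cq: "c x > 0" "q0 m > 0" unfolding Bi using cnn[of x] nn(2)[of m]
          by (metis mult_eq_0_iff order_le_less zero_less_mult_iff)+
        have "?A x m \<le> ?AX x" unfolding AXs using m fin Ann by (intro member_le_sum) auto
        then have ax: "?AX x > 0" using a by simp
        have "?A x m \<le> ?AY m" unfolding AYw_def using x fin Ann by (intro member_le_sum) auto
        then have ay: "?AY m > 0" using a by simp
        have "?AX x \<le> ?S" unfolding Sw_def using x fin Ann by (intro member_le_sum) (auto simp: AXs intro!: sum_nonneg)
        then have s: "?S > 0" using ax by simp
        have "log 2 (?A x m / ?B i x m) - log 2 (?AX x / c x) - log 2 (?A x m * ?S / (?AX x * ?AY m))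
           = log 2 (?AY m / (?S * q0 m))"
          unfolding Bi using a cq ax ay s by (simp add: log_mult log_divide)
        then show ?thesis by (simp add: right_diff_distrib[symmetric])
      qed
    qed
    finally show ?thesis .
  qed
  also have "\<dots> = (\<Sum>m\<in>Ms. ?AY m * log 2 (?AY m / (?S * q0 m)))"
    unfolding AYw_def sum_distrib_right by (rule sum.swap)
  finally have key2: "SXY v Xs Ls Ms i - SX v Xs Ls Ms i - MI v Xs Ls Ms = (\<Sum>m\<in>Ms. ?AY m * log 2 (?AY m / (?S * q0 m)))" .
  have AYnn: "0 \<le> ?AY m" for m unfolding AYw_def using Ann by (simp add: sum_nonneg)
  have Snn: "0 \<le> ?S" unfolding SAY using AYnn by (simp add: sum_nonneg)
  have "(\<Sum>m\<in>Ms. ?AY m) * log 2 ((\<Sum>m\<in>Ms. ?AY m) / (\<Sum>m\<in>Ms. ?S * q0 m)) \<le> (\<Sum>m\<in>Ms. ?AY m * log 2 (?AY m / (?S * q0 m)))"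
  proof (rule log_sum[OF fin(3)])
    fix m assume m: "m \<in> Ms"
    show "0 \<le> ?AY m" by (rule AYnn)
    show "0 \<le> ?S * q0 m" using Snn nn(2) by simp
    assume ay: "0 < ?AY m"
    have "\<exists>x\<in>Xs. ?A x m > 0"
    proof (rule ccontr)
      assume "\<not> ?thesis"
      then have "\<forall>x\<in>Xs. ?A x m \<le> 0" by auto
      then have "?AY m \<le> 0" unfolding AYw_def by (intro sum_nonpos) auto
      then show False using ay by simp
    qed
    then obtain x where x: "x \<in> Xs" "?A x m > 0" by blast
    then have "?B i x m > 0" using pos m i unfolding posc_def by auto
    then have cq: "0 < c x * q0 m" unfolding Bi .
    have q: "q0 m > 0"
    proof (rule ccontr)
      assume "\<not> q0 m > 0"
      then have "q0 m = 0" using nn(2)[of m] by simp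
      then show False using cq by simp
    qed
    have "?AY m \<le> ?S" unfolding SAY using m fin AYnn by (intro member_le_sum) auto
    then have "?S > 0" using ay by simp
    then show "0 < ?S * q0 m" using q by simp
  qed
  moreover have "(\<Sum>m\<in>Ms. ?AY m) * log 2 ((\<Sum>m\<in>Ms. ?AY m) / (\<Sum>m\<in>Ms. ?S * q0 m)) = 0"
    unfolding SAY[symmetric] sum_distrib_left[symmetric] sq by (cases "?S = 0") auto
  ultimately have I: "0 \<le> SXY v Xs Ls Ms i - SX v Xs Ls Ms i - MI v Xs Ls Ms" using key2 by simp
  have "(\<Sum>j<n. SXY v Xs Ls Ms j - SX v Xs Ls Ms j) = (SXY v Xs Ls Ms i - SX v Xs Ls Ms i) + (\<Sum>j\<in>{..<n}-{i}. SXY v Xs Ls Ms j - SX v Xs Ls Ms j)"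
    using i by (subst sum.remove[of _ i]) auto
  moreover have "0 \<le> (\<Sum>j\<in>{..<n}-{i}. SXY v Xs Ls Ms j - SX v Xs Ls Ms j)"
    using J by (intro sum_nonneg) auto
  ultimately show ?thesis unfolding FF_def using I by linarith
qed

lemma base_case:
  fixes \<nu> :: "'x \<Rightarrow> bool list \<Rightarrow> real"
  assumes fin: "finite Xs" "finite Ls" "finite Ts" and nn: "\<And>x l. 0 \<le> \<nu> x l"
  shows "FF n (\<lambda>x l t. \<nu> x l * (if t = t0 then 1 else 0)) Xs Ls Ts = 0"
proof -
  define w where "w = (\<lambda>x l t. \<nu> x l * (if t = t0 then 1 else 0 :: real))"
  have A: "t \<noteq> t0 \<Longrightarrow> Aw w Ls x t = 0" for x t
    unfolding Aw_def w_def by simp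
  have B: "t \<noteq> t0 \<Longrightarrow> Bw w Ls j x t = 0" for j x t
    unfolding Bw_def w_def by (simp cong: if_cong)
  have Ann: "0 \<le> Aw w Ls x t" for x t unfolding Aw_def w_def using nn by (simp add: sum_nonneg)
  have sd: "(\<Sum>t\<in>Ts. f t) = (if t0 \<in> Ts then f t0 else 0)" if "\<And>t. t \<noteq> t0 \<Longrightarrow> f t = 0" for f :: "_ \<Rightarrow> real"
  proof -
    have "(\<Sum>t\<in>Ts. f t) = (\<Sum>t\<in>Ts. if t = t0 then f t0 else 0)"
      by (rule sum.cong[OF refl]) (use that in auto)
    then show ?thesis using fin by (simp add: sum.delta)
  qed
  have AX: "AXw w Ls Ts x = (if t0 \<in> Ts then Aw w Ls x t0 else 0)" for x
    unfolding AXw_def by (rule sd) (rule A)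
  have CX: "CXw w Ls Ts j x = (if t0 \<in> Ts then Bw w Ls j x t0 else 0)" for j x
    unfolding CXw_def by (rule sd) (rule B)
  have SXY: "SXY w Xs Ls Ts j = SX w Xs Ls Ts j" for j
    unfolding SXY_def SX_def AX CX
  proof (intro sum.cong refl)
    fix x
    show "(\<Sum>t\<in>Ts. Aw w Ls x t * log 2 (Aw w Ls x t / Bw w Ls j x t)) =
       (if t0 \<in> Ts then Aw w Ls x t0 else 0) * log 2 ((if t0 \<in> Ts then Aw w Ls x t0 else 0) / (if t0 \<in> Ts then Bw w Ls j x t0 else 0))"
      by (subst sd) (auto simp: A)
  qed
  have AY: "AYw w Xs Ls t0 = Sw w Xs Ls Ts" if "t0 \<in> Ts"
    unfolding AYw_def Sw_def AX using that by simp
  have MI: "MI w Xs Ls Ts = 0"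
    unfolding MI_def
  proof (intro sum.neutral ballI)
    fix x t assume x: "x \<in> Xs" and t: "t \<in> Ts"
    show "Aw w Ls x t * log 2 (Aw w Ls x t * Sw w Xs Ls Ts / (AXw w Ls Ts x * AYw w Xs Ls t)) = 0"
    proof (cases "t = t0 \<and> Aw w Ls x t \<noteq> 0")
      case True
      then have tt: "t = t0" by simp
      have a: "Aw w Ls x t0 > 0" using Ann[of x t0] True by auto
      have t0: "t0 \<in> Ts" using t tt by simp
      have "Aw w Ls x t0 \<le> AYw w Xs Ls t0" unfolding AYw_def
        using x fin Ann by (intro member_le_sum) auto
      then have s: "Sw w Xs Ls Ts > 0" using a AY[OF t0] by simp
      have "Aw w Ls x t0 * Sw w Xs Ls Ts / (AXw w Ls Ts x * AYw w Xs Ls t0) = 1"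
        unfolding AX AY[OF t0] using t0 a s by simp
      then show ?thesis unfolding tt using s a by simp
    next
      case False
      then show ?thesis using A[of t x] by auto
    qed
  qed
  have "FF n w Xs Ls Ts = 0" unfolding FF_def SXY MI by simp
  then show ?thesis unfolding w_def .
qed




lemma run_finite:
  assumes fin_msgs: "\<forall>t i p0 px. prot t = Some (i, p0, px) \<longrightarrow>
        finite (set_pmf p0) \<and> (\<forall>x. finite (set_pmf (px x)))"
  shows "finite (set_pmf (run_protocol prot k x l t))"
proof (induction k arbitrary: t)
  case 0 then show ?case by simp
next
  case (Suc k)
  show ?case
  proof (cases "prot t")
    case None then show ?thesis by simp
  next
    case (Some a)
    then obtain i p0 px where a: "prot t = Some (i, p0, px)" by (cases a) auto
    then have "finite (set_pmf (if l ! i then px x else p0))" using fin_msgs by auto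
    then show ?thesis using a Suc by (simp add: set_bind_pmf)
  qed
qed

lemma run_prefix:
  "s \<in> set_pmf (run_protocol prot k x l t) \<Longrightarrow> \<exists>u. s = t @ u"
proof (induction k arbitrary: t)
  case 0 then show ?case by simp
next
  case (Suc k)
  show ?case
  proof (cases "prot t")
    case None then show ?thesis using Suc.prems by simp
  next
    case (Some a)
    then obtain i p0 px where a: "prot t = Some (i, p0, px)" by (cases a) auto
    then obtain m where "s \<in> set_pmf (run_protocol prot k x l (t @ [m]))"
      using Suc.prems by (auto simp: set_bind_pmf)
    then obtain u where "s = (t @ [m]) @ u" using Suc.IH by blast
    then show ?thesis by auto
  qed
qed

lemma pmf_bind_finite:
  fixes f :: "'a \<Rightarrow> 'b pmf"
  assumes "finite A" "set_pmf p \<subseteq> A"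
  shows "pmf (bind_pmf p f) y = (\<Sum>a\<in>A. pmf p a * pmf (f a) y)"
  unfolding pmf_bind using assms by (subst integral_measure_pmf[OF assms(1)]) auto

lemma base_run:
  assumes "finite Xs" "finite Ls" "finite Ts" "\<And>x l. 0 \<le> \<nu> x l"
  shows "FF n (\<lambda>x l t. \<nu> x l * pmf (return_pmf t0) t) Xs Ls Ts = 0"
proof -
  have "(\<lambda>x l t. \<nu> x l * pmf (return_pmf t0) t) = (\<lambda>x l t. \<nu> x l * (if t = t0 then 1 else 0))"
    by (auto simp: indicator_def fun_eq_iff)
  then show ?thesis using base_case[OF assms] by simp
qed

lemma main_ind:
  assumes players: "\<forall>t i p0 px. prot t = Some (i, p0, px) \<longrightarrow> i < n"
    and fin_msgs: "\<forall>t i p0 px. prot t = Some (i, p0, px) \<longrightarrow>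
        finite (set_pmf p0) \<and> (\<forall>x. finite (set_pmf (px x)))"
    and fin0: "finite Xs" "finite Ls"
  shows "finite Ts \<Longrightarrow> (\<And>x l. 0 \<le> \<nu> x l) \<Longrightarrow>
     (\<And>x l. x \<in> Xs \<Longrightarrow> l \<in> Ls \<Longrightarrow> \<nu> x l \<noteq> 0 \<Longrightarrow> set_pmf (run_protocol prot k x l t0) \<subseteq> Ts) \<Longrightarrow>
     posc n (\<lambda>x l t. \<nu> x l * pmf (run_protocol prot k x l t0) t) Xs Ls Ts \<Longrightarrow>
     0 \<le> FF n (\<lambda>x l t. \<nu> x l * pmf (run_protocol prot k x l t0) t) Xs Ls Ts"
proof (induction k arbitrary: t0 \<nu> Ts)
  case 0 then show ?case using base_run[OF fin0 "0.prems"(1-2)] by simp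
next
  case (Suc k t0 \<nu> Ts)
  note fin = fin0 Suc.prems(1) and nn = Suc.prems(2) and supp = Suc.prems(3) and pos = Suc.prems(4)
  show ?case
  proof (cases "prot t0")
    case None then show ?thesis using base_run[OF fin nn] by simp
  next
    case (Some a)
    then obtain i p0 px where a: "prot t0 = Some (i, p0, px)" by (cases a) auto
    have i: "i < n" using players a by auto
    have finq: "finite (set_pmf p0)" "\<And>x. finite (set_pmf (px x))" using fin_msgs a by auto
    define q where "q x l = (if l ! i then px x else p0)" for x l
    have run: "run_protocol prot (Suc k) x l t0 = bind_pmf (q x l) (\<lambda>m. run_protocol prot k x l (t0 @ [m]))" for x l
      using a by (simp add: q_def)
    define g where "g t = t ! length t0" for t :: "'a list"
    define Ms where "Ms = g ` Ts \<union> set_pmf p0 \<union> (\<Union>x\<in>Xs. set_pmf (px x))"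
    have finM: "finite Ms" unfolding Ms_def using fin finq by auto
    have qM: "set_pmf (q x l) \<subseteq> Ms" if "x \<in> Xs" for x l unfolding q_def Ms_def using that by auto
    have gM: "g ` Ts \<subseteq> Ms" unfolding Ms_def by auto
    have pre: "pmf (run_protocol prot k x l (t0 @ [m])) t = 0" if "g t \<noteq> m" for x l m t
    proof (rule pmf_eq_0_set_pmf[THEN iffD2], rule notI)
      assume "t \<in> set_pmf (run_protocol prot k x l (t0 @ [m]))"
      from run_prefix[OF this] obtain u where "t = (t0 @ [m]) @ u" by blast
      then have "g t = m" unfolding g_def by simp
      then show False using that by simp
    qed
    define w where "w = (\<lambda>x l t. \<nu> x l * pmf (run_protocol prot (Suc k) x l t0) t)"
    interpret D: decomp Xs Ls Ts Ms g w
      by unfold_locales (use fin finM gM nn in \<open>auto simp: w_def\<close>)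
    have wm_eq: "D.wm m x l t = \<nu> x l * pmf (q x l) m * pmf (run_protocol prot k x l (t0 @ [m])) t"
      if x: "x \<in> Xs" and t: "t \<in> Ts" for m x l t
    proof -
      have "pmf (run_protocol prot (Suc k) x l t0) t = (\<Sum>m'\<in>Ms. pmf (q x l) m' * pmf (run_protocol prot k x l (t0 @ [m'])) t)"
        unfolding run by (rule pmf_bind_finite[OF finM qM[OF x]])
      also have "\<dots> = (\<Sum>m'\<in>Ms. if m' = g t then pmf (q x l) m' * pmf (run_protocol prot k x l (t0 @ [m'])) t else 0)"
        by (intro sum.cong refl) (auto simp: pre)
      also have "\<dots> = pmf (q x l) (g t) * pmf (run_protocol prot k x l (t0 @ [g t])) t"
        using finM gM t by (simp add: sum.delta' image_subset_iff)
      finally have "pmf (run_protocol prot (Suc k) x l t0) t = pmf (q x l) (g t) * pmf (run_protocol prot k x l (t0 @ [g t])) t" .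
      then show ?thesis unfolding D.wm_def by (cases "g t = m") (simp_all del: run_protocol.simps add: pre w_def)
    qed
    have IH: "0 \<le> FF n (D.wm m) Xs Ls Ts" for m
    proof -
      define \<nu>' where "\<nu>' x l = \<nu> x l * pmf (q x l) m" for x l
      have cong: "D.wm m x l t = \<nu>' x l * pmf (run_protocol prot k x l (t0 @ [m])) t"
        if "x \<in> Xs" "l \<in> Ls" "t \<in> Ts" for x l t using wm_eq[of x t m l] that by (simp add: \<nu>'_def)
      have "0 \<le> FF n (\<lambda>x l t. \<nu>' x l * pmf (run_protocol prot k x l (t0 @ [m])) t) Xs Ls Ts"
      proof (rule Suc.IH[OF fin(3)])
        show "0 \<le> \<nu>' x l" for x l unfolding \<nu>'_def using nn by simp
        show "set_pmf (run_protocol prot k x l (t0 @ [m])) \<subseteq> Ts"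
          if "x \<in> Xs" "l \<in> Ls" "\<nu>' x l \<noteq> 0" for x l
        proof -
          have "\<nu> x l \<noteq> 0" "m \<in> set_pmf (q x l)" using that by (auto simp: \<nu>'_def pmf_eq_0_set_pmf)
          then have "set_pmf (run_protocol prot k x l (t0 @ [m])) \<subseteq> set_pmf (run_protocol prot (Suc k) x l t0)"
            unfolding run by (auto simp: set_bind_pmf)
          then show ?thesis using supp[OF that(1,2) \<open>\<nu> x l \<noteq> 0\<close>] by blast
        qed
        have "posc n (D.wm m) Xs Ls Ts" using D.pos_wm pos unfolding w_def by blast
        then show "posc n (\<lambda>x l t. \<nu>' x l * pmf (run_protocol prot k x l (t0 @ [m])) t) Xs Ls Ts"
          using FF_cong(2)[of Xs Ls Ts "D.wm m", OF cong] by simp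
      qed
      then show ?thesis using FF_cong(1)[of Xs Ls Ts "D.wm m", OF cong] by simp
    qed
    have v_eq: "D.v x l m = \<nu> x l * (if l ! i then pmf (px x) m else pmf p0 m)"
      if x: "x \<in> Xs" and l: "l \<in> Ls" and m: "m \<in> Ms" for x l m
    proof -
      have "D.v x l m = (\<Sum>t\<in>Ts. \<nu> x l * pmf (q x l) m * pmf (run_protocol prot k x l (t0 @ [m])) t)"
        unfolding D.v_def using wm_eq x by (intro sum.cong refl) auto
      also have "\<dots> = \<nu> x l * pmf (q x l) m * (\<Sum>t\<in>Ts. pmf (run_protocol prot k x l (t0 @ [m])) t)"
        by (simp add: sum_distrib_left)
      also have "\<dots> = \<nu> x l * pmf (q x l) m"
      proof (cases "\<nu> x l * pmf (q x l) m = 0")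
        case False
        then have "\<nu> x l \<noteq> 0" "m \<in> set_pmf (q x l)" by (auto simp: pmf_eq_0_set_pmf)
        then have "set_pmf (run_protocol prot k x l (t0 @ [m])) \<subseteq> set_pmf (run_protocol prot (Suc k) x l t0)"
          unfolding run by (auto simp: set_bind_pmf)
        then have "set_pmf (run_protocol prot k x l (t0 @ [m])) \<subseteq> Ts" using supp[OF x l \<open>\<nu> x l \<noteq> 0\<close>] by blast
        then show ?thesis using fin(3) by (simp add: sum_pmf_eq_1)
      qed simp
      finally show ?thesis by (simp add: q_def)
    qed
    define v' where "v' = (\<lambda>x l m. \<nu> x l * (if l ! i then pmf (px x) m else pmf p0 m))"
    have "0 \<le> FF n v' Xs Ls Ms"
    proof (rule one_step[OF fin(1,2) finM i nn])
      show "\<And>m. 0 \<le> pmf p0 m" "\<And>x m. 0 \<le> pmf (px x) m" by simp_all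
      show "(\<Sum>m\<in>Ms. pmf p0 m) = 1" using finM by (rule sum_pmf_eq_1) (auto simp: Ms_def)
      show "v' = (\<lambda>x l m. \<nu> x l * (if l ! i then pmf (px x) m else pmf p0 m))" by (rule v'_def)
      have "posc n D.v Xs Ls Ms" using D.pos_v pos unfolding w_def by blast
      then show "posc n v' Xs Ls Ms" using FF_cong(2)[of Xs Ls Ms D.v v'] v_eq unfolding v'_def by simp
    qed
    then have "0 \<le> FF n D.v Xs Ls Ms" using FF_cong(1)[of Xs Ls Ms D.v v'] v_eq unfolding v'_def by simp
    moreover have "0 \<le> (\<Sum>m\<in>Ms. FF n (D.wm m) Xs Ls Ts)" using IH by (simp add: sum_nonneg)
    ultimately have "0 \<le> FF n w Xs Ls Ts" using D.FF_decomp by simp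
    then show ?thesis unfolding w_def .
  qed
qed




lemma prob_map_finite:
  assumes U: "finite U" "set_pmf p \<subseteq> U"
  shows "measure_pmf.prob (map_pmf f p) E = (\<Sum>u\<in>U. if f u \<in> E then pmf p u else 0)"
proof -
  have "measure_pmf.prob (map_pmf f p) E = measure_pmf.prob p (f -` E)" by simp
  also have "\<dots> = measure_pmf.prob p (f -` E \<inter> set_pmf p)" by (rule measure_Int_set_pmf[symmetric])
  also have "f -` E \<inter> set_pmf p = (f -` E \<inter> U) \<inter> set_pmf p" using U by auto
  also have "measure_pmf.prob p \<dots> = measure_pmf.prob p (f -` E \<inter> U)" by (rule measure_Int_set_pmf)
  also have "\<dots> = sum (pmf p) (f -` E \<inter> U)" using U by (intro measure_measure_pmf_finite) auto
  also have "f -` E \<inter> U = {u \<in> U. f u \<in> E}" by auto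
  also have "sum (pmf p) \<dots> = (\<Sum>u\<in>U. if f u \<in> E then pmf p u else 0)" using U(1) by (simp add: sum.inter_filter)
  finally show ?thesis .
qed

lemma cond_bounds: "0 \<le> cond_ignorant Q i y" "cond_ignorant Q i y \<le> 1"
proof -
  let ?a = "measure_pmf.prob Q {(y', l). y' = y \<and> \<not> l ! i}" and ?b = "measure_pmf.prob Q {(y', l). y' = y}"
  have "?a \<le> ?b" by (intro measure_pmf.finite_measure_mono) auto
  moreover have "0 \<le> ?a" by simp
  moreover have "0 \<le> ?b" by simp
  ultimately show "0 \<le> cond_ignorant Q i y" "cond_ignorant Q i y \<le> 1"
    unfolding cond_ignorant_def by (auto simp: divide_le_eq_1 less_le)
qed

lemma neglog_nonneg: "0 \<le> q \<Longrightarrow> q \<le> 1 \<Longrightarrow> 0 \<le> neglog q"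
  unfolding neglog_def by auto

lemma susp_nonneg: "0 \<le> susp Q i"
  unfolding susp_def
  by (intro sum_nonneg) (simp add: neglog_nonneg cond_bounds)

lemma susp_fin:
  assumes "\<And>y. y \<in> fst ` set_pmf Q \<Longrightarrow> cond_ignorant Q i y > 0"
  shows "susp Q i = ereal (\<Sum>y\<in>fst ` set_pmf Q. pmf (map_pmf fst Q) y * (- log 2 (cond_ignorant Q i y)))"
  unfolding susp_def sum_ereal[symmetric]
proof (intro sum.cong refl)
  fix y assume "y \<in> fst ` set_pmf Q"
  then have "cond_ignorant Q i y > 0" by (rule assms)
  then show "ereal (pmf (map_pmf fst Q) y) * neglog (cond_ignorant Q i y) =
      ereal (pmf (map_pmf fst Q) y * - log 2 (cond_ignorant Q i y))" by (simp add: neglog_def)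
qed

lemma susp_inf:
  assumes "finite (set_pmf Q)" "y \<in> fst ` set_pmf Q" "cond_ignorant Q i y = 0"
  shows "susp Q i = \<infinity>"
proof -
  have "pmf (map_pmf fst Q) y > 0" using assms(2) by (simp add: pmf_positive)
  then have "ereal (pmf (map_pmf fst Q) y) * neglog (cond_ignorant Q i y) = \<infinity>"
    using assms(3) by (simp add: neglog_def)
  then show ?thesis unfolding susp_def using assms(1,2) by (subst sum_Pinfty) auto
qed




lemma sum3: "(\<Sum>u\<in>A \<times> B \<times> C. h u) = (\<Sum>x\<in>A. \<Sum>y\<in>B. \<Sum>z\<in>C. h (x, y, z))"
  by (simp add: sum.cartesian_product case_prod_beta)

lemma sum2: "(\<Sum>u\<in>A \<times> B. h u) = (\<Sum>x\<in>A. \<Sum>y\<in>B. h (x, y))"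
  by (simp add: sum.cartesian_product case_prod_beta)

lemma sumL1:
  assumes "x0 \<in> Xs" "finite Xs"
  shows "(\<Sum>x\<in>Xs. \<Sum>l\<in>Ls. \<Sum>t\<in>Ts. if x = x0 \<and> P l t then w x l t else 0)
       = (\<Sum>l\<in>Ls. \<Sum>t\<in>Ts. if P l t then w x0 l t else (0::real))"
proof -
  have "(\<Sum>x\<in>Xs. \<Sum>l\<in>Ls. \<Sum>t\<in>Ts. if x = x0 \<and> P l t then w x l t else 0)
     = (\<Sum>x\<in>Xs. if x = x0 then (\<Sum>l\<in>Ls. \<Sum>t\<in>Ts. if P l t then w x0 l t else 0) else 0)"
    by (intro sum.cong refl) auto
  also have "\<dots> = (\<Sum>l\<in>Ls. \<Sum>t\<in>Ts. if P l t then w x0 l t else 0)"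
    using assms by (simp add: sum.delta)
  finally show ?thesis .
qed

lemma sumH:
  assumes "t0 \<in> Ts" "finite Ts"
  shows "(\<Sum>t\<in>Ts. if t = t0 \<and> c then f t else 0) = (if c then f t0 else (0::real))"
  using assms by (cases c) (simp_all add: sum.delta)

lemma cond_pos:
  assumes "measure_pmf.prob Q {(y', l). y' = y \<and> \<not> l ! i} > 0"
  shows "cond_ignorant Q i y > 0"
proof -
  let ?a = "measure_pmf.prob Q {(y', l). y' = y \<and> \<not> l ! i}" and ?b = "measure_pmf.prob Q {(y', l). y' = y}"
  have "?a \<le> ?b" by (intro measure_pmf.finite_measure_mono) auto
  then show ?thesis using assms unfolding cond_ignorant_def by simp
qed

theorem theorem3p4:
  fixes \<mu> :: "('x \<times> bool list) pmf" and n :: nat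
    and prot :: "('x, 'm) protocol" and N :: nat
  assumes fin_X: "finite (fst ` set_pmf \<mu>)"
    and len_L: "\<forall>(x, l) \<in> set_pmf \<mu>. length l = n"
    and ign_pos: "\<forall>x \<in> fst ` set_pmf \<mu>. \<forall>i < n.
        measure_pmf.prob \<mu> {(x', l). x' = x \<and> \<not> l ! i} > 0"
    and players: "\<forall>t i p0 px. prot t = Some (i, p0, px) \<longrightarrow> i < n"
    and fin_msgs: "\<forall>t i p0 px. prot t = Some (i, p0, px) \<longrightarrow>
        finite (set_pmf p0) \<and> (\<forall>x. finite (set_pmf (px x)))"
    and length_bound: "\<forall>t. N \<le> length t \<longrightarrow> prot t = None"
  shows "ereal (mutual_info (map_pmf (\<lambda>(x, l, t). (x, t)) (joint_dist \<mu> prot N)))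
    \<le> (\<Sum>i<n. susp (map_pmf (\<lambda>(x, l, t). ((x, t), l)) (joint_dist \<mu> prot N)) i
              - susp (map_pmf (\<lambda>(x, l, t). (x, l)) (joint_dist \<mu> prot N)) i)"
proof -
  define J where "J = joint_dist \<mu> prot N"
  define Xs where "Xs = fst ` set_pmf \<mu>"
  define Ls where "Ls = snd ` set_pmf \<mu>"
  have finXs: "finite Xs" unfolding Xs_def by (rule fin_X)
  have "Ls \<subseteq> {l. set l \<subseteq> (UNIV :: bool set) \<and> length l = n}" unfolding Ls_def using len_L by auto
  then have finLs: "finite Ls" using finite_lists_length_eq[of "UNIV :: bool set" n] by (auto intro: finite_subset)
  have muU: "set_pmf \<mu> \<subseteq> Xs \<times> Ls" unfolding Xs_def Ls_def by force
  have finmu: "finite (set_pmf \<mu>)" using muU finXs finLs by (auto intro: finite_subset)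
  define R where "R x l = run_protocol prot N x l []" for x l
  define Ts where "Ts = (\<Union>x\<in>Xs. \<Union>l\<in>Ls. set_pmf (R x l))"
  have finTs: "finite Ts" unfolding Ts_def R_def using finXs finLs run_finite[OF fin_msgs] by auto
  define w where "w x l t = pmf \<mu> (x, l) * pmf (R x l) t" for x l t
  define U where "U = Xs \<times> Ls \<times> Ts"
  have finU: "finite U" unfolding U_def using finXs finLs finTs by auto
  have Jdef: "J = bind_pmf \<mu> (\<lambda>(x, l). map_pmf (\<lambda>t. (x, l, t)) (R x l))"
    unfolding J_def joint_dist_def R_def ..
  have pmf_inner: "pmf (map_pmf (\<lambda>t. (x', l', t)) (R x' l')) (x, l, t) = (if x' = x \<and> l' = l then pmf (R x l) t else 0)"
    for x' l' x l t
  proof (cases "x' = x \<and> l' = l")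
    case True
    have "inj (\<lambda>t. (x, l, t))" by (auto simp: inj_on_def)
    then show ?thesis using True pmf_map_inj'[of "\<lambda>t. (x, l, t)" "R x l" t] by simp
  next
    case False
    then show ?thesis by (auto simp: pmf_eq_0_set_pmf)
  qed
  have pmfJ: "pmf J (x, l, t) = w x l t" for x l t
  proof -
    have "pmf J (x, l, t) = (\<Sum>a\<in>set_pmf \<mu>. pmf \<mu> a * pmf ((\<lambda>(x, l). map_pmf (\<lambda>t. (x, l, t)) (R x l)) a) (x, l, t))"
      unfolding Jdef by (rule pmf_bind_finite[OF finmu order_refl])
    also have "\<dots> = (\<Sum>a\<in>set_pmf \<mu>. if a = (x, l) then pmf \<mu> (x, l) * pmf (R x l) t else 0)"
      by (intro sum.cong refl) (auto simp: pmf_inner split: prod.splits)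
    also have "\<dots> = w x l t" using finmu by (auto simp: sum.delta' w_def pmf_eq_0_set_pmf)
    finally show ?thesis .
  qed
  have setJ: "set_pmf J \<subseteq> U"
    unfolding Jdef U_def Ts_def using muU by (auto simp: set_bind_pmf) (meson SigmaD1 SigmaD2 subsetD)
  have probJ: "measure_pmf.prob (map_pmf f J) E = (\<Sum>x\<in>Xs. \<Sum>l\<in>Ls. \<Sum>t\<in>Ts. if f (x, l, t) \<in> E then w x l t else 0)" for f :: "_ \<Rightarrow> 'z" and E
    unfolding prob_map_finite[OF finU setJ] U_def sum3 by (simp add: pmfJ cong: if_cong)
  have pmfmap: "pmf (map_pmf f J) y = (\<Sum>x\<in>Xs. \<Sum>l\<in>Ls. \<Sum>t\<in>Ts. if f (x, l, t) = y then w x l t else 0)" for f :: "_ \<Rightarrow> 'z" and y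
    using probJ[of f "{y}"] by (simp add: measure_pmf_single)
  have wnn: "0 \<le> w x l t" for x l t unfolding w_def by simp

  define P where "P = map_pmf (\<lambda>(x, l, t). (x, t)) J"
  define J1 where "J1 = map_pmf (\<lambda>(x, l, t). ((x, t), l)) J"
  define J2 where "J2 = map_pmf (\<lambda>(x, l, t). (x, l)) J"

  have vA: "pmf P (x0, t0) = Aw w Ls x0 t0" if "x0 \<in> Xs" "t0 \<in> Ts" for x0 t0
  proof -
    have "pmf P (x0, t0) = (\<Sum>x\<in>Xs. \<Sum>l\<in>Ls. \<Sum>t\<in>Ts. if x = x0 \<and> t = t0 then w x l t else 0)"
      unfolding P_def pmfmap by (intro sum.cong refl) auto
    also have "\<dots> = Aw w Ls x0 t0"
      unfolding sumL1[OF that(1) finXs] Aw_def using that finTs by (simp add: sum.delta')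
    finally show ?thesis .
  qed
  have vA1: "measure_pmf.prob J1 {(y', l). y' = (x0, t0)} = Aw w Ls x0 t0" if "x0 \<in> Xs" "t0 \<in> Ts" for x0 t0
  proof -
    have "measure_pmf.prob J1 {(y', l). y' = (x0, t0)} = (\<Sum>x\<in>Xs. \<Sum>l\<in>Ls. \<Sum>t\<in>Ts. if x = x0 \<and> t = t0 then w x l t else 0)"
      unfolding J1_def probJ by (intro sum.cong refl) auto
    also have "\<dots> = Aw w Ls x0 t0"
      unfolding sumL1[OF that(1) finXs] Aw_def using that finTs by (simp add: sum.delta')
    finally show ?thesis .
  qed
  have vB1: "measure_pmf.prob J1 {(y', l). y' = (x0, t0) \<and> \<not> l ! i} = Bw w Ls i x0 t0" if "x0 \<in> Xs" "t0 \<in> Ts" for x0 t0 i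
  proof -
    have "measure_pmf.prob J1 {(y', l). y' = (x0, t0) \<and> \<not> l ! i} = (\<Sum>x\<in>Xs. \<Sum>l\<in>Ls. \<Sum>t\<in>Ts. if x = x0 \<and> (t = t0 \<and> \<not> l ! i) then w x l t else 0)"
      unfolding J1_def probJ by (intro sum.cong refl) auto
    also have "\<dots> = Bw w Ls i x0 t0"
      unfolding sumL1[OF that(1) finXs] Bw_def sumH[OF that(2) finTs] by (intro sum.cong refl) auto
    finally show ?thesis .
  qed
  have vAX: "pmf (map_pmf (\<lambda>(x, l, t). x) J) x0 = AXw w Ls Ts x0" if "x0 \<in> Xs" for x0
  proof -
    have "pmf (map_pmf (\<lambda>(x, l, t). x) J) x0 = (\<Sum>x\<in>Xs. \<Sum>l\<in>Ls. \<Sum>t\<in>Ts. if x = x0 \<and> True then w x l t else 0)"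
      unfolding pmfmap by (intro sum.cong refl) auto
    also have "\<dots> = AXw w Ls Ts x0"
      unfolding sumL1[OF that(1) finXs] AXw_def Aw_def by (simp add: sum.swap[of _ Ls])
    finally show ?thesis .
  qed
  have vAX2: "measure_pmf.prob J2 {(x', l). x' = x0} = AXw w Ls Ts x0" if "x0 \<in> Xs" for x0
  proof -
    have "measure_pmf.prob J2 {(x', l). x' = x0} = (\<Sum>x\<in>Xs. \<Sum>l\<in>Ls. \<Sum>t\<in>Ts. if x = x0 \<and> True then w x l t else 0)"
      unfolding J2_def probJ by (intro sum.cong refl) auto
    also have "\<dots> = AXw w Ls Ts x0"
      unfolding sumL1[OF that(1) finXs] AXw_def Aw_def by (simp add: sum.swap[of _ Ls])
    finally show ?thesis .
  qed
  have vCX2: "measure_pmf.prob J2 {(x', l). x' = x0 \<and> \<not> l ! i} = CXw w Ls Ts i x0" if "x0 \<in> Xs" for x0 i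
  proof -
    have "measure_pmf.prob J2 {(x', l). x' = x0 \<and> \<not> l ! i} = (\<Sum>x\<in>Xs. \<Sum>l\<in>Ls. \<Sum>t\<in>Ts. if x = x0 \<and> \<not> l ! i then w x l t else 0)"
      unfolding J2_def probJ by (intro sum.cong refl) auto
    also have "\<dots> = (\<Sum>l\<in>Ls. \<Sum>t\<in>Ts. if l ! i then 0 else w x0 l t)"
      unfolding sumL1[OF that(1) finXs] by (intro sum.cong refl) auto
    also have "\<dots> = CXw w Ls Ts i x0"
      unfolding CXw_def Bw_def by (rule sum.swap)
    finally show ?thesis .
  qed
  have vAY: "pmf (map_pmf (\<lambda>(x, l, t). t) J) t0 = AYw w Xs Ls t0" if "t0 \<in> Ts" for t0
  proof -
    have "pmf (map_pmf (\<lambda>(x, l, t). t) J) t0 = (\<Sum>x\<in>Xs. \<Sum>l\<in>Ls. \<Sum>t\<in>Ts. if t = t0 then w x l t else 0)"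
      unfolding pmfmap by (intro sum.cong refl) auto
    also have "\<dots> = AYw w Xs Ls t0"
      unfolding AYw_def Aw_def using that finTs by (simp add: sum.delta')
    finally show ?thesis .
  qed
  have vS: "Sw w Xs Ls Ts = 1"
  proof -
    have "Sw w Xs Ls Ts = (\<Sum>x\<in>Xs. \<Sum>l\<in>Ls. \<Sum>t\<in>Ts. w x l t)"
      unfolding Sw_def AXw_def Aw_def by (simp add: sum.swap[of _ Ls])
    also have "\<dots> = (\<Sum>u\<in>U. pmf J u)" unfolding U_def sum3 pmfJ ..
    also have "\<dots> = 1" by (rule sum_pmf_eq_1[OF finU setJ])
    finally show ?thesis .
  qed

  have J2mu: "J2 = \<mu>"
  proof -
    have "J2 = bind_pmf \<mu> (\<lambda>(x, l). return_pmf (x, l))"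
      unfolding J2_def Jdef map_bind_pmf by (simp add: map_pmf_comp case_prod_beta)
    also have "(\<lambda>(x, l). return_pmf (x, l)) = return_pmf" by (auto simp: fun_eq_iff)
    finally show ?thesis by (simp add: bind_return_pmf')
  qed
  have mfJ2: "map_pmf fst J2 = map_pmf (\<lambda>(x, l, t). x) J"
    unfolding J2_def map_pmf_comp by (intro map_pmf_cong refl) auto
  have mfJ1: "map_pmf fst J1 = P"
    unfolding J1_def P_def map_pmf_comp by (intro map_pmf_cong refl) auto
  have mfP: "map_pmf fst P = map_pmf (\<lambda>(x, l, t). x) J"
    unfolding P_def map_pmf_comp by (intro map_pmf_cong refl) auto
  have msP: "map_pmf snd P = map_pmf (\<lambda>(x, l, t). t) J"
    unfolding P_def map_pmf_comp by (intro map_pmf_cong refl) auto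
  have setP: "set_pmf P \<subseteq> Xs \<times> Ts" unfolding P_def using setJ by (auto simp: U_def)
  have domJ1: "fst ` set_pmf J1 = set_pmf P" by (simp add: mfJ1[symmetric])
  have finJ1: "finite (set_pmf J1)" unfolding J1_def using setJ finU by (auto intro: finite_subset)
  have condJ2: "cond_ignorant J2 i x = CXw w Ls Ts i x / AXw w Ls Ts x" if "x \<in> Xs" for x i
    unfolding cond_ignorant_def using vCX2[OF that] vAX2[OF that] by simp
  have condJ1: "cond_ignorant J1 i (x, t) = Bw w Ls i x t / Aw w Ls x t" if "x \<in> Xs" "t \<in> Ts" for x t i
    unfolding cond_ignorant_def using vB1[OF that] vA1[OF that] by simp
  have CXpos: "CXw w Ls Ts i x > 0" if "x \<in> Xs" "i < n" for x i
  proof -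
    have "0 < measure_pmf.prob \<mu> {(x', l). x' = x \<and> \<not> l ! i}"
      using ign_pos that(2) that(1)[unfolded Xs_def] by blast
    then show ?thesis using vCX2[OF that(1), of i] unfolding J2mu by simp
  qed
  have CXAX: "CXw w Ls Ts i x \<le> AXw w Ls Ts x" if "x \<in> Xs" for x i
    unfolding vCX2[OF that, symmetric] vAX2[OF that, symmetric]
    by (intro measure_pmf.finite_measure_mono) auto
  have suspJ2: "susp J2 i = ereal (SX w Xs Ls Ts i)" if i: "i < n" for i
  proof -
    have "susp J2 i = ereal (\<Sum>x\<in>fst ` set_pmf J2. pmf (map_pmf fst J2) x * (- log 2 (cond_ignorant J2 i x)))"
    proof (rule susp_fin)
      fix x assume "x \<in> fst ` set_pmf J2"
      then have "x \<in> Xs" by (simp add: J2mu Xs_def)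
      then show "cond_ignorant J2 i x > 0" using condJ2 CXpos CXAX i
        by (metis divide_pos_pos order_less_le_trans)
    qed
    also have "(\<Sum>x\<in>fst ` set_pmf J2. pmf (map_pmf fst J2) x * (- log 2 (cond_ignorant J2 i x))) = SX w Xs Ls Ts i"
      unfolding SX_def
    proof (intro sum.cong)
      show "fst ` set_pmf J2 = Xs" by (simp add: J2mu Xs_def)
      fix x assume x: "x \<in> Xs"
      have c: "CXw w Ls Ts i x > 0" using CXpos x i by simp
      then have a: "AXw w Ls Ts x > 0" using CXAX[OF x, of i] by simp
      show "pmf (map_pmf fst J2) x * - log 2 (cond_ignorant J2 i x) = AXw w Ls Ts x * log 2 (AXw w Ls Ts x / CXw w Ls Ts i x)"
        unfolding mfJ2 vAX[OF x] condJ2[OF x] using a c by (simp add: log_divide)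
    qed
    finally show ?thesis .
  qed
  have MIeq: "mutual_info P = MI w Xs Ls Ts"
  proof -
    have "mutual_info P = (\<Sum>(a, b)\<in>Xs \<times> Ts. pmf P (a, b) * log 2 (pmf P (a, b) / (pmf (map_pmf fst P) a * pmf (map_pmf snd P) b)))"
      unfolding mutual_info_def by (rule sum.mono_neutral_left) (use finXs finTs setP in \<open>auto simp: pmf_eq_0_set_pmf\<close>)
    also have "\<dots> = (\<Sum>a\<in>Xs. \<Sum>b\<in>Ts. pmf P (a, b) * log 2 (pmf P (a, b) / (pmf (map_pmf fst P) a * pmf (map_pmf snd P) b)))"
      by (rule sum.cartesian_product[symmetric])
    also have "\<dots> = MI w Xs Ls Ts"
      unfolding MI_def vS by (intro sum.cong refl) (simp add: vA vAX vAY mfP msP)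
    finally show ?thesis .
  qed
  have Ann: "0 \<le> Aw w Ls x t" for x t unfolding Aw_def using wnn by (simp add: sum_nonneg)
  have Bnn: "0 \<le> Bw w Ls i x t" for x t i unfolding Bw_def using wnn by (simp add: sum_nonneg)
  have suspJ1: "susp J1 i = ereal (SXY w Xs Ls Ts i)" if i: "i < n" and pos: "posc n w Xs Ls Ts" for i
  proof -
    have "susp J1 i = ereal (\<Sum>y\<in>fst ` set_pmf J1. pmf (map_pmf fst J1) y * (- log 2 (cond_ignorant J1 i y)))"
    proof (rule susp_fin)
      fix y assume "y \<in> fst ` set_pmf J1"
      then have y: "y \<in> set_pmf P" by (simp add: domJ1)
      then obtain x t where xt: "y = (x, t)" "x \<in> Xs" "t \<in> Ts" using setP by auto
      have "Aw w Ls x t > 0" using pmf_positive[of "(x, t)" P] y xt vA[OF xt(2,3)] by simp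
      moreover have "Bw w Ls i x t > 0" using pos xt calculation i unfolding posc_def by auto
      ultimately show "cond_ignorant J1 i y > 0" using condJ1[OF xt(2,3)] xt(1) by simp
    qed
    also have "(\<Sum>y\<in>fst ` set_pmf J1. pmf (map_pmf fst J1) y * (- log 2 (cond_ignorant J1 i y)))
        = (\<Sum>y\<in>Xs \<times> Ts. pmf P y * (- log 2 (cond_ignorant J1 i y)))"
      unfolding domJ1 mfJ1 by (rule sum.mono_neutral_left) (use finXs finTs setP in \<open>auto simp: pmf_eq_0_set_pmf\<close>)
    also have "\<dots> = (\<Sum>x\<in>Xs. \<Sum>t\<in>Ts. pmf P (x, t) * (- log 2 (cond_ignorant J1 i (x, t))))"
      by (rule sum2)
    also have "\<dots> = SXY w Xs Ls Ts i"
      unfolding SXY_def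
    proof (intro sum.cong refl)
      fix x t assume x: "x \<in> Xs" and t: "t \<in> Ts"
      show "pmf P (x, t) * - log 2 (cond_ignorant J1 i (x, t)) = Aw w Ls x t * log 2 (Aw w Ls x t / Bw w Ls i x t)"
      proof (cases "Aw w Ls x t = 0")
        case True then show ?thesis using vA[OF x t] by simp
      next
        case False
        then have a: "Aw w Ls x t > 0" using Ann[of x t] by simp
        then have b: "Bw w Ls i x t > 0" using pos x t i unfolding posc_def by auto
        show ?thesis unfolding vA[OF x t] condJ1[OF x t] using a b by (simp add: log_divide)
      qed
    qed
    finally show ?thesis .
  qed
  have wfun: "(\<lambda>x l t. pmf \<mu> (x, l) * pmf (run_protocol prot N x l []) t) = w"
    by (simp add: fun_eq_iff w_def R_def)
  show ?thesis
    unfolding J_def[symmetric] P_def[symmetric] J1_def[symmetric] J2_def[symmetric]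
  proof (cases "posc n w Xs Ls Ts")
    case True
    have "0 \<le> FF n (\<lambda>x l t. pmf \<mu> (x, l) * pmf (run_protocol prot N x l []) t) Xs Ls Ts"
    proof (rule main_ind[OF players fin_msgs finXs finLs finTs])
      show "0 \<le> pmf \<mu> (x, l)" for x l by simp
      show "set_pmf (run_protocol prot N x l []) \<subseteq> Ts" if "x \<in> Xs" "l \<in> Ls" "pmf \<mu> (x, l) \<noteq> 0" for x l
        using that unfolding Ts_def R_def by auto
      show "posc n (\<lambda>x l t. pmf \<mu> (x, l) * pmf (run_protocol prot N x l []) t) Xs Ls Ts"
        unfolding wfun by (rule True)
    qed
    then have "MI w Xs Ls Ts \<le> (\<Sum>i<n. SXY w Xs Ls Ts i - SX w Xs Ls Ts i)"
      unfolding wfun FF_def by simp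
    moreover have "(\<Sum>i<n. susp J1 i - susp J2 i) = ereal (\<Sum>i<n. SXY w Xs Ls Ts i - SX w Xs Ls Ts i)"
      by (simp add: suspJ1[OF _ True] suspJ2)
    ultimately show "ereal (mutual_info P) \<le> (\<Sum>i<n. susp J1 i - susp J2 i)"
      unfolding MIeq by simp
  next
    case False
    then obtain x t j where xt: "x \<in> Xs" "t \<in> Ts" "j < n" "Aw w Ls x t > 0" "\<not> Bw w Ls j x t > 0"
      unfolding posc_def by blast
    then have b0: "Bw w Ls j x t = 0" using Bnn[of j x t] by simp
    have "(x, t) \<in> fst ` set_pmf J1"
      unfolding domJ1 using vA[OF xt(1,2)] xt(4) by (simp add: set_pmf_iff)
    then have inf: "susp J1 j = \<infinity>"
      using susp_inf[OF finJ1] condJ1[OF xt(1,2)] b0 by simp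
    have "(\<Sum>i<n. susp J1 i - susp J2 i) = \<infinity>"
    proof (subst sum_Pinfty, intro conjI bexI)
      show "susp J1 j - susp J2 j = \<infinity>" using inf suspJ2[OF xt(3)] by simp
    qed (use xt in auto)
    then show "ereal (mutual_info P) \<le> (\<Sum>i<n. susp J1 i - susp J2 i)" by simp
  qed
qed


end
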